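(* For any time warp $f$, $n\in\omega\setminus\{0\}$, and $m\in\omega$: $f^{\ell}(n)=m\iff f(m-1)<n\le f(m)$; $f^{\ell}(n)=\omega\iff f(\omega)<n$; $f^{\ell}(\omega)=m\iff f(m)=\omega$ and $f^{\ell}(k)=m$ for some $k\in\omega$; $f^{\ell}(\omega)=\omega\iff f(\omega)<\omega$ or ($f(\omega)=\omega$ and $f(k)<\omega$ for all $k\in\omega$).
   Context: Let $\overline{\omega}=\omega\cup\{\omega\}$ be the natural numbers with a top element $\omega$ adjoined, with its natural total order. A time warp is a monotone map $f\colon\overline{\omega}\to\overline{\omega}$ with $f(0)=0$ and $f(\omega)=\bigvee\{f(n)\mid n\in\omega\}$. The set $W$ of time warps is ordered pointwise and $fg:=f\circ g$; $\mathrm{id}$ is the identity. The right residual $/$ is the binary operation on $W$ with $f\le h/g\iff fg\le h$ for all $f,g,h\in W$. Define $f^{\ell}:=\mathrm{id}/f$. *)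

theory Defs
  imports Main "HOL-Library.Extended_Nat"
begin

text \<open>The ordinal omega+1 (naturals with a top element) is modelled by enat,
  with \<infinity> playing the role of omega.\<close>

definition time_warp :: "(enat \<Rightarrow> enat) \<Rightarrow> bool" where
  "time_warp f \<longleftrightarrow> mono f \<and> f 0 = 0 \<and> f \<infinity> = (SUP n. f (enat n))"

definition rres :: "(enat \<Rightarrow> enat) \<Rightarrow> (enat \<Rightarrow> enat) \<Rightarrow> (enat \<Rightarrow> enat)" where
  "rres h g = (THE r. time_warp r \<and> (\<forall>f. time_warp f \<longrightarrow> (f \<le> r \<longleftrightarrow> f \<circ> g \<le> h)))"

definition lres :: "(enat \<Rightarrow> enat) \<Rightarrow> (enat \<Rightarrow> enat)" where
  "lres f = rres id f"

end

theory Submission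
  imports Defs
begin

definition R :: "(enat \<Rightarrow> enat) \<Rightarrow> enat \<Rightarrow> enat" where
  "R f y = Inf {x. y \<le> f x}"

lemma R_le: "y \<le> f x \<Longrightarrow> R f y \<le> x"
  unfolding R_def by (rule Inf_lower) simp

lemma R_attain: "\<exists>x. y \<le> f x \<Longrightarrow> y \<le> f (R f y)"
  unfolding R_def Inf_enat_def by (auto intro: LeastI)

lemma R_none: "\<not> (\<exists>x. y \<le> f x) \<Longrightarrow> R f y = \<infinity>"
  unfolding R_def Inf_enat_def by auto

lemma R_greatest: "(\<And>x. y \<le> f x \<Longrightarrow> z \<le> x) \<Longrightarrow> z \<le> R f y"
  unfolding R_def by (rule Inf_greatest) simp

lemma R_tw:
  assumes "time_warp f"
  shows "time_warp (R f)"
proof -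
  have mf: "mono f" using assms by (simp add: time_warp_def)
  have mR: "mono (R f)"
    by (rule monoI, rule R_greatest) (meson R_le order_trans)
  have R0: "R f 0 = 0" using R_le[of 0 f 0] by simp
  have "R f \<infinity> = (SUP n. R f (enat n))"
  proof (rule antisym)
    show "(SUP n. R f (enat n)) \<le> R f \<infinity>"
      by (rule SUP_least) (meson mR monoD enat_ord_simps(3))
  next
    show "R f \<infinity> \<le> (SUP n. R f (enat n))"
    proof (cases "(SUP n. R f (enat n))")
      case (enat M)
      have "f (enat M) = \<infinity>"
      proof (rule ccontr)
        assume "f (enat M) \<noteq> \<infinity>"
        then obtain c where c: "f (enat M) = enat c" by auto
        show False
        proof (cases "\<exists>x. enat (Suc c) \<le> f x")
          case True
          have "R f (enat (Suc c)) \<le> enat M"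
            using enat by (metis SUP_upper UNIV_I)
          then have "f (R f (enat (Suc c))) \<le> enat c" using mf c by (metis monoD)
          with R_attain[OF True] show False
            by (metis Suc_ile_eq order.strict_trans2 less_irrefl)
        next
          case False
          then have "R f (enat (Suc c)) = \<infinity>" by (rule R_none)
          moreover have "R f (enat (Suc c)) \<le> enat M"
            using enat by (metis SUP_upper UNIV_I)
          ultimately show False by simp
        qed
      qed
      then show ?thesis using enat R_le[of "\<infinity>" f "enat M"] by simp
    qed simp
  qed
  then show ?thesis using mR R0 by (simp add: time_warp_def)
qed

lemma R_galois:
  assumes "mono g"
  shows "g \<le> R f \<longleftrightarrow> g \<circ> f \<le> id"
proof
  assume "g \<le> R f"
  then show "g \<circ> f \<le> id" by (auto simp: le_fun_def intro: order_trans R_le)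
next
  assume h: "g \<circ> f \<le> id"
  show "g \<le> R f"
    unfolding le_fun_def
  proof
    fix y show "g y \<le> R f y"
    proof (rule R_greatest)
      fix x assume "y \<le> f x"
      then have "g y \<le> g (f x)" using assms by (simp add: monoD)
      also have "\<dots> \<le> x" using h by (simp add: le_fun_def)
      finally show "g y \<le> x" .
    qed
  qed
qed

lemma lres_R:
  assumes "time_warp f"
  shows "lres f = R f"
  unfolding lres_def rres_def
proof (rule the_equality)
  show "time_warp (R f) \<and> (\<forall>g. time_warp g \<longrightarrow> (g \<le> R f \<longleftrightarrow> g \<circ> f \<le> id))"
    using R_tw[OF assms] R_galois by (simp add: time_warp_def)
next
  fix r assume r: "time_warp r \<and> (\<forall>g. time_warp g \<longrightarrow> (g \<le> r \<longleftrightarrow> g \<circ> f \<le> id))"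
  then have "r \<circ> f \<le> id" by blast
  then have 1: "r \<le> R f" using r R_galois by (simp add: time_warp_def)
  have "R f \<circ> f \<le> id" using R_galois[of "R f" f] R_tw[OF assms] by (simp add: time_warp_def)
  then have "R f \<le> r" using r R_tw[OF assms] by blast
  with 1 show "r = R f" by simp
qed

lemma tw_sup:
  assumes "time_warp f" "enat n \<le> f \<infinity>"
  shows "\<exists>k. enat n \<le> f (enat k)"
proof (cases n)
  case 0 then show ?thesis using zero_enat_def by (metis zero_le)
next
  case (Suc p)
  then have "enat p < (SUP k. f (enat k))" using assms
    by (simp add: time_warp_def Suc_ile_eq)
  then obtain k where "enat p < f (enat k)" by (auto simp: less_SUP_iff)
  then show ?thesis using Suc Suc_ile_eq by blast
qed

theorem lemma2p7:
  fixes f :: "enat \<Rightarrow> enat" and n m :: nat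
  assumes "time_warp f" and "n \<noteq> 0"
  shows "(lres f (enat n) = enat m \<longleftrightarrow>
            ((0 < m \<longrightarrow> f (enat (m - 1)) < enat n) \<and> enat n \<le> f (enat m)))
       \<and> (lres f (enat n) = \<infinity> \<longleftrightarrow> f \<infinity> < enat n)
       \<and> (lres f \<infinity> = enat m \<longleftrightarrow>
            (f (enat m) = \<infinity> \<and> (\<exists>k::nat. lres f (enat k) = enat m)))
       \<and> (lres f \<infinity> = \<infinity> \<longleftrightarrow>
            (f \<infinity> < \<infinity> \<or> (f \<infinity> = \<infinity> \<and> (\<forall>k::nat. f (enat k) < \<infinity>))))"
proof -
  have L: "lres f = R f" by (rule lres_R[OF assms(1)])
  have mf: "mono f" using assms(1) by (simp add: time_warp_def)
  have mR: "mono (R f)" using R_tw[OF assms(1)] by (simp add: time_warp_def)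
  have R0: "R f 0 = 0" using R_le[of 0 f 0] by simp
  have A: "R f (enat n') = enat m' \<longleftrightarrow>
            ((0 < m' \<longrightarrow> f (enat (m' - 1)) < enat n') \<and> enat n' \<le> f (enat m'))" for n' m'
  proof
    assume h: "R f (enat n') = enat m'"
    then have ex: "\<exists>x. enat n' \<le> f x" using R_none[of _ f] by (metis enat.distinct(1))
    have 1: "enat n' \<le> f (enat m')" using R_attain[OF ex] h by simp
    have "f (enat (m' - 1)) < enat n'" if "0 < m'"
    proof (rule ccontr)
      assume "\<not> f (enat (m' - 1)) < enat n'"
      then have "R f (enat n') \<le> enat (m' - 1)" by (intro R_le) simp
      with h that show False by simp
    qed
    with 1 show "(0 < m' \<longrightarrow> f (enat (m' - 1)) < enat n') \<and> enat n' \<le> f (enat m')" by blast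
  next
    assume h: "(0 < m' \<longrightarrow> f (enat (m' - 1)) < enat n') \<and> enat n' \<le> f (enat m')"
    have "R f (enat n') \<le> enat m'" using h by (intro R_le) simp
    moreover have "enat m' \<le> R f (enat n')"
    proof (rule R_greatest)
      fix x assume x: "enat n' \<le> f x"
      show "enat m' \<le> x"
      proof (rule ccontr)
        assume "\<not> enat m' \<le> x"
        then obtain k where k: "x = enat k" "k < m'" by (cases x) auto
        then have "f x \<le> f (enat (m' - 1))" using mf by (simp add: monoD)
        with h k x show False by auto
      qed
    qed
    ultimately show "R f (enat n') = enat m'" by simp
  qed
  have B: "R f (enat n) = \<infinity> \<longleftrightarrow> f \<infinity> < enat n"
  proof
    assume h: "R f (enat n) = \<infinity>"
    show "f \<infinity> < enat n"
    proof (rule ccontr)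
      assume "\<not> f \<infinity> < enat n"
      then obtain k where "enat n \<le> f (enat k)" using tw_sup[OF assms(1)] by force
      then have "R f (enat n) \<le> enat k" by (rule R_le)
      with h show False by simp
    qed
  next
    assume h: "f \<infinity> < enat n"
    have "\<not> (\<exists>x. enat n \<le> f x)"
    proof
      assume "\<exists>x. enat n \<le> f x"
      then obtain x where "enat n \<le> f x" by blast
      moreover have "f x \<le> f \<infinity>" using mf by (simp add: monoD)
      ultimately show False using h by simp
    qed
    then show "R f (enat n) = \<infinity>" by (rule R_none)
  qed
  have C: "R f \<infinity> = enat m \<longleftrightarrow> (f (enat m) = \<infinity> \<and> (\<exists>k::nat. R f (enat k) = enat m))"
  proof
    assume h: "R f \<infinity> = enat m"
    then have ex: "\<exists>x. \<infinity> \<le> f x" using R_none[of _ f] by (metis enat.distinct(1))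
    have fm: "f (enat m) = \<infinity>" using R_attain[OF ex] h by simp
    have "\<exists>k::nat. R f (enat k) = enat m"
    proof (cases m)
      case 0 then show ?thesis using R0 zero_enat_def by (metis)
    next
      case (Suc p)
      have "f (enat p) \<noteq> \<infinity>"
      proof
        assume "f (enat p) = \<infinity>"
        then have "R f \<infinity> \<le> enat p" by (intro R_le) simp
        with h Suc show False by simp
      qed
      then obtain c where c: "f (enat p) = enat c" by auto
      have "R f (enat (Suc c)) = enat m" using A[of "Suc c" m] Suc c fm by simp
      then show ?thesis by blast
    qed
    with fm show "f (enat m) = \<infinity> \<and> (\<exists>k::nat. R f (enat k) = enat m)" by blast
  next
    assume h: "f (enat m) = \<infinity> \<and> (\<exists>k::nat. R f (enat k) = enat m)"
    have "R f \<infinity> \<le> enat m" using h by (intro R_le) simp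
    moreover obtain k where "R f (enat k) = enat m" using h by blast
    moreover have "R f (enat k) \<le> R f \<infinity>" using mR by (simp add: monoD)
    ultimately show "R f \<infinity> = enat m" by simp
  qed
  have D: "R f \<infinity> = \<infinity> \<longleftrightarrow> (f \<infinity> < \<infinity> \<or> (f \<infinity> = \<infinity> \<and> (\<forall>k::nat. f (enat k) < \<infinity>)))"
  proof
    assume h: "R f \<infinity> = \<infinity>"
    have "f (enat k) < \<infinity>" for k
    proof (rule ccontr)
      assume "\<not> f (enat k) < \<infinity>"
      then have "R f \<infinity> \<le> enat k" by (intro R_le) simp
      with h show False by simp
    qed
    then show "f \<infinity> < \<infinity> \<or> (f \<infinity> = \<infinity> \<and> (\<forall>k::nat. f (enat k) < \<infinity>))"
      by (metis enat_ord_simps(4) less_infinityE)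
  next
    assume h: "f \<infinity> < \<infinity> \<or> (f \<infinity> = \<infinity> \<and> (\<forall>k::nat. f (enat k) < \<infinity>))"
    have fk: "f (enat k) < \<infinity>" for k
    proof -
      have "f (enat k) \<le> f \<infinity>" using mf by (simp add: monoD)
      then show ?thesis using h by (metis order.strict_trans1)
    qed
    have "\<infinity> \<le> R f \<infinity>"
    proof (rule R_greatest)
      fix x assume "\<infinity> \<le> f x"
      then show "\<infinity> \<le> x" using fk by (cases x) (auto, metis enat.distinct(1))
    qed
    then show "R f \<infinity> = \<infinity>" by simp
  qed
  show ?thesis unfolding L using A[of n m] B C D by blast
qed

end
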